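(* Let $L>0$, $\mathbb{T}=\mathbb{R}/L\mathbb{Z}$, let $(\gamma_k)_{k\in\mathbb{Z}}$ be positive reals, and let $u$ be the solution of the linear equation \[ u_t-u_{txx}+u_x+\mathscr{L}_\gamma(u)=0,\quad x\in\mathbb{T},\qquad u(0)=u_0. \] Assume there exist positive constants $\alpha,\beta,C$ such that (i) $|\hat{u}_{0,k}|^2\le C\gamma_k^{2\delta}$ for all $k$, where $\delta=\alpha+\beta$; (ii) $\sum_{k\in\mathbb{Z}}(1+k^2)^{2\alpha+1}\gamma_k^{2\beta}<+\infty$. Then for all $t>0$, \[ |u(t)|_{H^1}^2\le Ce^{-2\alpha}\Big(\frac{\alpha}{t}\Big)^{2\alpha}\sum_{k\in\mathbb{Z}}(1+k^2)^{2\alpha+1}\gamma_k^{2\beta}=O\Big(\frac{1}{t^{2\alpha}}\Big). \]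
   Context: For $u\in L^2(\mathbb{T})$, $\hat u_k$ is its $k$-th Fourier coefficient and $\hat u_{0,k}$ those of $u_0$; in symbols $k$ stands for the frequency $2\pi k/L$. $\mathscr{L}_\gamma$ is the Fourier multiplier $\widehat{\mathscr{L}_\gamma(u)}_k=\gamma_k\hat u_k$. The $H^1$ norm is $|u|_{H^1}^2=\sum_k(1+k^2)|\hat u_k|^2$. The solution is given by $\hat u_k(t)=e^{-\frac{\gamma_k+ik}{1+k^2}t}\hat u_k(0)$. *)

theory Defs
  imports "HOL-Analysis.Analysis"
begin

text \<open>Functions in L^2 of the torus R/LZ are represented by their Fourier
coefficient sequences (int => complex), square summable (Riesz-Fischer).
The symbol k in formulas stands for the frequency 2 pi k / L.\<close>

definition freq :: "real \<Rightarrow> int \<Rightarrow> real" where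
  "freq L k = 2 * pi * real_of_int k / L"

text \<open>Fourier coefficients of the solution u(t) of
  u_t - u_txx + u_x + L_gamma(u) = 0, u(0) = u0, with hat u0 = c.\<close>
definition sol_coeff :: "real \<Rightarrow> (int \<Rightarrow> real) \<Rightarrow> (int \<Rightarrow> complex) \<Rightarrow> real \<Rightarrow> int \<Rightarrow> complex" where
  "sol_coeff L \<gamma> c t k =
     exp (- ((complex_of_real (\<gamma> k) + \<i> * complex_of_real (freq L k))
             / complex_of_real (1 + (freq L k)\<^sup>2)) * complex_of_real t) * c k"

definition H1_norm_sq :: "real \<Rightarrow> (int \<Rightarrow> complex) \<Rightarrow> real" where
  "H1_norm_sq L v = (\<Sum>\<^sub>\<infinity>k. (1 + (freq L k)\<^sup>2) * (cmod (v k))\<^sup>2)"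

end

theory Submission
  imports Defs
begin

lemma key_bound:
  fixes w g t \<alpha> :: real
  assumes w: "w > 0" and g: "g > 0" and t: "t > 0" and a: "\<alpha> > 0"
  shows "exp (-2*g*t/w) * g powr (2*\<alpha>) \<le> exp (- 2 * \<alpha>) * (\<alpha> / t) powr (2 * \<alpha>) * w powr (2*\<alpha>)"
proof -
  define x where "x = g*t/w"
  have x: "x > 0" using w g t by (simp add: x_def)
  have "ln (x/\<alpha>) \<le> x/\<alpha> - 1" using x a by (intro ln_le_minus_one) simp
  hence "\<alpha> * ln (x/\<alpha>) \<le> x - \<alpha>" using a by (simp add: field_simps)
  moreover have "ln (x/\<alpha>) = ln g + ln t - ln w - ln \<alpha>"
    using x a w g t by (simp add: x_def ln_div ln_mult)
  ultimately have "\<alpha> * (ln g + ln t - ln w - ln \<alpha>) \<le> x - \<alpha>" by simp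
  hence ineq0: "-2*x + 2*\<alpha>*ln g \<le> -2*\<alpha> + 2*\<alpha>*(ln \<alpha> - ln t) + 2*\<alpha>*ln w"
    by (simp add: algebra_simps)
  have "-2*g*t/w = -2*x" by (simp add: x_def)
  with ineq0 have ineq: "-2*g*t/w + 2*\<alpha>*ln g \<le> -2*\<alpha> + 2*\<alpha>*(ln \<alpha> - ln t) + 2*\<alpha>*ln w" by simp
  have "exp (-2*g*t/w) * g powr (2*\<alpha>) = exp (-2*g*t/w + 2*\<alpha>*ln g)"
    using g by (simp add: powr_def exp_add[symmetric] algebra_simps)
  also have "\<dots> \<le> exp (-2*\<alpha> + 2*\<alpha>*(ln \<alpha> - ln t) + 2*\<alpha>*ln w)"
    using ineq by simp
  also have "\<dots> = exp (- 2 * \<alpha>) * (\<alpha> / t) powr (2 * \<alpha>) * w powr (2*\<alpha>)"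
    using a t w by (simp add: powr_def exp_add[symmetric] ln_div algebra_simps)
  finally show ?thesis .
qed

lemma cmod_sol_sq:
  "(cmod (sol_coeff L \<gamma> c t k))\<^sup>2 = exp (-2*\<gamma> k*t/(1 + (freq L k)\<^sup>2)) * (cmod (c k))\<^sup>2"
proof -
  have pos: "1 + (freq L k)\<^sup>2 > 0" by (simp add: add_pos_nonneg)
  have re: "Re (- ((complex_of_real (\<gamma> k) + \<i> * complex_of_real (freq L k))
             / complex_of_real (1 + (freq L k)\<^sup>2)) * complex_of_real t) = - \<gamma> k * t / (1 + (freq L k)\<^sup>2)"
    using pos by (simp add: Re_divide_of_real)
  show ?thesis unfolding sol_coeff_def norm_mult norm_exp_eq_Re re power_mult_distrib
    by (simp add: power2_eq_square exp_add[symmetric])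
qed

theorem mainTheorem6:
  fixes L \<alpha> \<beta> C :: real and \<gamma> :: "int \<Rightarrow> real" and c :: "int \<Rightarrow> complex"
  assumes L_pos: "L > 0"
    and \<gamma>_pos: "\<And>k. \<gamma> k > 0"
    and u0_L2: "(\<lambda>k. (cmod (c k))\<^sup>2) summable_on UNIV"
    and \<alpha>_pos: "\<alpha> > 0" and \<beta>_pos: "\<beta> > 0" and C_pos: "C > 0"
    and hyp_i: "\<And>k. (cmod (c k))\<^sup>2 \<le> C * \<gamma> k powr (2 * (\<alpha> + \<beta>))"
    and hyp_ii: "(\<lambda>k. (1 + (freq L k)\<^sup>2) powr (2 * \<alpha> + 1) * \<gamma> k powr (2 * \<beta>)) summable_on UNIV"
  shows "\<forall>t > 0.
     (\<lambda>k. (1 + (freq L k)\<^sup>2) * (cmod (sol_coeff L \<gamma> c t k))\<^sup>2) summable_on UNIV \<and>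
     H1_norm_sq L (sol_coeff L \<gamma> c t)
       \<le> C * exp (- 2 * \<alpha>) * (\<alpha> / t) powr (2 * \<alpha>)
          * (\<Sum>\<^sub>\<infinity>k. (1 + (freq L k)\<^sup>2) powr (2 * \<alpha> + 1) * \<gamma> k powr (2 * \<beta>))"
proof (intro allI impI)
  fix t :: real assume t: "t > 0"
  define K where "K = C * exp (- 2 * \<alpha>) * (\<alpha> / t) powr (2 * \<alpha>)"
  define f where "f = (\<lambda>k. (1 + (freq L k)\<^sup>2) * (cmod (sol_coeff L \<gamma> c t k))\<^sup>2)"
  define h where "h = (\<lambda>k. (1 + (freq L k)\<^sup>2) powr (2 * \<alpha> + 1) * \<gamma> k powr (2 * \<beta>))"
  have bound: "f k \<le> K * h k" for k
  proof -
    let ?w = "1 + (freq L k)\<^sup>2" and ?g = "\<gamma> k"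
    have w: "?w > 0" by (simp add: add_pos_nonneg)
    have g: "?g > 0" by (rule \<gamma>_pos)
    have E: "exp (-2*?g*t/?w) > 0" by simp
    have "f k = ?w * exp (-2*?g*t/?w) * (cmod (c k))\<^sup>2"
      by (simp add: f_def cmod_sol_sq)
    also have "\<dots> \<le> ?w * exp (-2*?g*t/?w) * (C * ?g powr (2*\<alpha>) * ?g powr (2*\<beta>))"
      using hyp_i[of k] w E by (intro mult_left_mono) (auto simp: powr_add distrib_left mult.assoc)
    also have "\<dots> = C * ?w * ?g powr (2*\<beta>) * (exp (-2*?g*t/?w) * ?g powr (2*\<alpha>))"
      by (simp add: algebra_simps)
    also have "\<dots> \<le> C * ?w * ?g powr (2*\<beta>) * (exp (- 2 * \<alpha>) * (\<alpha> / t) powr (2 * \<alpha>) * ?w powr (2*\<alpha>))"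
      using key_bound[OF w g t \<alpha>_pos] C_pos w by (intro mult_left_mono) auto
    also have "\<dots> = K * h k"
      using w by (simp add: K_def h_def powr_add algebra_simps)
    finally show ?thesis .
  qed
  have fnn: "f k \<ge> 0" for k by (simp add: f_def add_nonneg_nonneg)
  have hs: "(\<lambda>k. K * h k) summable_on UNIV"
    using hyp_ii unfolding h_def by (intro summable_on_cmult_right)
  have fs: "f summable_on UNIV"
    using hs by (rule summable_on_comparison_test) (use bound fnn in auto)
  have "H1_norm_sq L (sol_coeff L \<gamma> c t) = infsum f UNIV"
    by (simp add: H1_norm_sq_def f_def)
  also have "\<dots> \<le> infsum (\<lambda>k. K * h k) UNIV"
    using fs hs bound by (intro infsum_mono) auto
  also have "\<dots> = K * infsum h UNIV" by (rule infsum_cmult_right')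
  finally have "f summable_on UNIV \<and> H1_norm_sq L (sol_coeff L \<gamma> c t) \<le> K * infsum h UNIV"
    using fs by simp
  thus "(\<lambda>k. (1 + (freq L k)\<^sup>2) * (cmod (sol_coeff L \<gamma> c t k))\<^sup>2) summable_on UNIV \<and>
     H1_norm_sq L (sol_coeff L \<gamma> c t)
       \<le> C * exp (- 2 * \<alpha>) * (\<alpha> / t) powr (2 * \<alpha>)
          * (\<Sum>\<^sub>\<infinity>k. (1 + (freq L k)\<^sup>2) powr (2 * \<alpha> + 1) * \<gamma> k powr (2 * \<beta>))"
    unfolding K_def h_def f_def .
qed

end
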